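(* For every integer $n\geq 2$, the set $\bigcup_{|\lambda|>1}\ker(W_n^{*}-\lambda I)$ spans a dense subspace of $H^2$.
   Context: $H^2$ denotes the Hardy space of analytic functions $f(z)=\sum_{k\ge0}\hat f(k)z^k$ on the open unit disk with $\sum_{k}|\hat f(k)|^2<\infty$. For $n\in\mathbb{N}$, $W_n$ is the bounded operator on $H^2$ given by $W_nf(z)=(1+z+\cdots+z^{n-1})f(z^n)$, and $W_n^{*}$ is its adjoint; $I$ is the identity and $\lambda$ ranges over complex numbers. *)

theory Defs
  imports "HOL-Analysis.Analysis"
begin

text \<open>An element f of H^2 is identified with its Taylor coefficient sequence
  (k \<mapsto> hat f k), f(z) = sum_k hat f k z^k.  H^2 is the set of square-summable sequences.\<close>

definition H2 :: "(nat \<Rightarrow> complex) set" where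
  "H2 = {a. summable (\<lambda>k. (cmod (a k))\<^sup>2)}"

definition h2_inner :: "(nat \<Rightarrow> complex) \<Rightarrow> (nat \<Rightarrow> complex) \<Rightarrow> complex" where
  "h2_inner a b = (\<Sum>k. a k * cnj (b k))"

definition h2_norm :: "(nat \<Rightarrow> complex) \<Rightarrow> real" where
  "h2_norm a = sqrt (\<Sum>k. (cmod (a k))\<^sup>2)"

text \<open>W_n f(z) = (1+z+...+z^(n-1)) f(z^n) = sum_k sum_(j<n) hat f k z^(n k + j),
  so the m-th Taylor coefficient of W_n f is hat f (m div n).\<close>

definition W :: "nat \<Rightarrow> (nat \<Rightarrow> complex) \<Rightarrow> (nat \<Rightarrow> complex)" where
  "W n a = (\<lambda>m. a (m div n))"

definition adjoint_H2 :: "((nat \<Rightarrow> complex) \<Rightarrow> (nat \<Rightarrow> complex)) \<Rightarrow> (nat \<Rightarrow> complex) \<Rightarrow> (nat \<Rightarrow> complex)" where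
  "adjoint_H2 T g = (THE h. h \<in> H2 \<and> (\<forall>f\<in>H2. h2_inner (T f) g = h2_inner f h))"

definition eigenspace_H2 :: "((nat \<Rightarrow> complex) \<Rightarrow> (nat \<Rightarrow> complex)) \<Rightarrow> complex \<Rightarrow> (nat \<Rightarrow> complex) set" where
  "eigenspace_H2 T lam = {g \<in> H2. (\<lambda>k. T g k - lam * g k) = (\<lambda>k. 0)}"

definition cspan_seq :: "(nat \<Rightarrow> complex) set \<Rightarrow> (nat \<Rightarrow> complex) set" where
  "cspan_seq S = {g. \<exists>m (c :: nat \<Rightarrow> complex) v. (\<forall>i<m. v i \<in> S) \<and>
                       g = (\<lambda>k. \<Sum>i<m. c i * v i k)}"

definition dense_in_H2 :: "(nat \<Rightarrow> complex) set \<Rightarrow> bool" where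
  "dense_in_H2 V \<longleftrightarrow> (\<forall>f\<in>H2. \<forall>e>0. \<exists>g\<in>V. h2_norm (\<lambda>k. f k - g k) < e)"

end

theory Submission
  imports Defs
begin

lemma L2_le_h2:
  assumes "a \<in> H2"
  shows "L2_set (\<lambda>k. cmod (a k)) {..<K} \<le> h2_norm a"
proof -
  have s: "summable (\<lambda>k. (cmod (a k))\<^sup>2)" using assms by (simp add: H2_def)
  have "(\<Sum>k<K. (cmod (a k))\<^sup>2) \<le> (\<Sum>k. (cmod (a k))\<^sup>2)"
    by (rule sum_le_suminf[OF s]) auto
  then show ?thesis unfolding L2_set_def h2_norm_def by (rule real_sqrt_le_mono)
qed

lemma L2_bound:
  assumes "\<And>K. L2_set (\<lambda>k. cmod (a k)) {..<K} \<le> B"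
  shows "a \<in> H2" "h2_norm a \<le> B"
proof -
  have B0: "0 \<le> B" using assms[of 0] by simp
  have le: "(\<Sum>k<K. (cmod (a k))\<^sup>2) \<le> B\<^sup>2" for K
  proof -
    have "sqrt (\<Sum>k<K. (cmod (a k))\<^sup>2) \<le> B" using assms[of K] by (simp add: L2_set_def)
    then show ?thesis using B0 by (metis real_le_rsqrt sum_nonneg zero_le_power2 real_sqrt_le_iff
        real_sqrt_pow2 power_mono real_sqrt_ge_zero)
  qed
  have s: "summable (\<lambda>k. (cmod (a k))\<^sup>2)"
    by (rule summableI_nonneg_bounded[of _ "B\<^sup>2"]) (use le in auto)
  then show "a \<in> H2" by (simp add: H2_def)
  have "(\<Sum>k. (cmod (a k))\<^sup>2) \<le> B\<^sup>2"
    by (rule suminf_le_const[OF s]) (use le in auto)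
  then show "h2_norm a \<le> B" unfolding h2_norm_def using B0 by (simp add: real_sqrt_le_iff real_le_lsqrt)
qed

lemma L2_set_sum_le:
  assumes "finite T"
  shows "L2_set (\<lambda>k. \<Sum>i\<in>T. f i k) A \<le> (\<Sum>i\<in>T. L2_set (f i) A)"
  using assms
proof (induction T rule: finite_induct)
  case empty
  then show ?case by (simp add: L2_set_def)
next
  case (insert x F)
  have "L2_set (\<lambda>k. \<Sum>i\<in>insert x F. f i k) A = L2_set (\<lambda>k. f x k + (\<Sum>i\<in>F. f i k)) A"
    using insert by simp
  also have "\<dots> \<le> L2_set (f x) A + L2_set (\<lambda>k. \<Sum>i\<in>F. f i k) A"
    by (rule L2_set_triangle_ineq)
  also have "\<dots> \<le> L2_set (f x) A + (\<Sum>i\<in>F. L2_set (f i) A)" using insert by simp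
  finally show ?case using insert by simp
qed

lemma L2_sum_cmod:
  assumes "finite T"
  shows "L2_set (\<lambda>k. cmod (\<Sum>i\<in>T. x i k)) {..<K} \<le> (\<Sum>i\<in>T. L2_set (\<lambda>k. cmod (x i k)) {..<K})"
proof -
  have "L2_set (\<lambda>k. cmod (\<Sum>i\<in>T. x i k)) {..<K} \<le> L2_set (\<lambda>k. \<Sum>i\<in>T. cmod (x i k)) {..<K}"
    by (rule L2_set_mono) (auto intro: norm_sum)
  also have "\<dots> \<le> (\<Sum>i\<in>T. L2_set (\<lambda>k. cmod (x i k)) {..<K})"
    by (rule L2_set_sum_le[OF assms])
  finally show ?thesis .
qed

lemma fin_tri:
  assumes "finite T" "\<And>i. i \<in> T \<Longrightarrow> x i \<in> H2"
  shows "(\<lambda>k. \<Sum>i\<in>T. x i k) \<in> H2" "h2_norm (\<lambda>k. \<Sum>i\<in>T. x i k) \<le> (\<Sum>i\<in>T. h2_norm (x i))"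
proof -
  have "L2_set (\<lambda>k. cmod (\<Sum>i\<in>T. x i k)) {..<K} \<le> (\<Sum>i\<in>T. h2_norm (x i))" for K
    using L2_sum_cmod[OF assms(1), of x K] sum_mono[of T "\<lambda>i. L2_set (\<lambda>k. cmod (x i k)) {..<K}"
        "\<lambda>i. h2_norm (x i)"] L2_le_h2[OF assms(2)] by force
  then show "(\<lambda>k. \<Sum>i\<in>T. x i k) \<in> H2" "h2_norm (\<lambda>k. \<Sum>i\<in>T. x i k) \<le> (\<Sum>i\<in>T. h2_norm (x i))"
    by (rule L2_bound)+
qed

lemma h2_norm_nonneg: assumes "a \<in> H2" shows "0 \<le> h2_norm a"
  using assms unfolding H2_def h2_norm_def by (simp add: suminf_nonneg)

lemma pt_le: assumes "a \<in> H2" shows "cmod (a k) \<le> h2_norm a"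
proof -
  have "cmod (a k) \<le> L2_set (\<lambda>k. cmod (a k)) {..<Suc k}"
    by (rule member_le_L2_set) auto
  then show ?thesis using L2_le_h2[OF assms, of "Suc k"] by linarith
qed

lemma inf_tri:
  assumes "\<And>i. x i \<in> H2" "\<And>i. h2_norm (x i) \<le> w i" "summable w"
  shows "\<And>k. summable (\<lambda>i. x i k)" "(\<lambda>k. \<Sum>i. x i k) \<in> H2" "h2_norm (\<lambda>k. \<Sum>i. x i k) \<le> suminf w"
proof -
  have w0: "0 \<le> w i" for i using assms(2)[of i] h2_norm_nonneg[OF assms(1)[of i]] by linarith
  show sk: "summable (\<lambda>i. x i k)" for k
  proof (rule summable_norm_cancel, rule summable_comparison_test[OF _ assms(3)])
    have "norm (norm (x i k)) \<le> w i" for i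
      using pt_le[OF assms(1), of i k] assms(2)[of i] by simp
    then show "\<exists>N. \<forall>i\<ge>N. norm (norm (x i k)) \<le> w i" by blast
  qed
  have "L2_set (\<lambda>k. cmod (\<Sum>i. x i k)) {..<K} \<le> suminf w" for K
  proof -
    have lim: "(\<lambda>I. L2_set (\<lambda>k. cmod (\<Sum>i<I. x i k)) {..<K}) \<longlonglongrightarrow> L2_set (\<lambda>k. cmod (\<Sum>i. x i k)) {..<K}"
      unfolding L2_set_def
      by (intro tendsto_intros summable_LIMSEQ sk)
    show ?thesis
    proof (rule LIMSEQ_le_const2[OF lim], rule exI[of _ 0], intro allI impI)
      fix I :: nat
      have "L2_set (\<lambda>k. cmod (\<Sum>i<I. x i k)) {..<K} \<le> (\<Sum>i<I. h2_norm (x i))"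
        using fin_tri[of "{..<I}" x] L2_le_h2 by (meson assms(1) finite_lessThan order_trans)
      also have "\<dots> \<le> (\<Sum>i<I. w i)" by (rule sum_mono) (use assms(2) in auto)
      also have "\<dots> \<le> suminf w" by (rule sum_le_suminf[OF assms(3)]) (use w0 in auto)
      finally show "L2_set (\<lambda>k. cmod (\<Sum>i<I. x i k)) {..<K} \<le> suminf w" .
    qed
  qed
  then show "(\<lambda>k. \<Sum>i. x i k) \<in> H2" "h2_norm (\<lambda>k. \<Sum>i. x i k) \<le> suminf w"
    by (rule L2_bound)+
qed


lemma h2_scale:
  assumes "a \<in> H2"
  shows "(\<lambda>k. c * a k) \<in> H2" "h2_norm (\<lambda>k. c * a k) = cmod c * h2_norm a"
proof -
  have s: "summable (\<lambda>k. (cmod (a k))\<^sup>2)" using assms by (simp add: H2_def)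
  have e: "(\<lambda>k. (cmod (c * a k))\<^sup>2) = (\<lambda>k. (cmod c)\<^sup>2 * (cmod (a k))\<^sup>2)"
    by (simp add: norm_mult power_mult_distrib)
  show "(\<lambda>k. c * a k) \<in> H2" unfolding H2_def using summable_mult[OF s, of "(cmod c)\<^sup>2"] e by simp
  show "h2_norm (\<lambda>k. c * a k) = cmod c * h2_norm a"
    unfolding h2_norm_def e suminf_mult[OF s] by (simp add: real_sqrt_mult)
qed

lemma h2_add:
  assumes "a \<in> H2" "b \<in> H2"
  shows "(\<lambda>k. a k + b k) \<in> H2" "h2_norm (\<lambda>k. a k + b k) \<le> h2_norm a + h2_norm b"
proof -
  have "L2_set (\<lambda>k. cmod (a k + b k)) {..<K} \<le> h2_norm a + h2_norm b" for K
  proof -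
    have "L2_set (\<lambda>k. cmod (a k + b k)) {..<K} \<le> L2_set (\<lambda>k. cmod (a k) + cmod (b k)) {..<K}"
      by (rule L2_set_mono) (auto intro: norm_triangle_ineq)
    also have "\<dots> \<le> L2_set (\<lambda>k. cmod (a k)) {..<K} + L2_set (\<lambda>k. cmod (b k)) {..<K}"
      by (rule L2_set_triangle_ineq)
    finally show ?thesis using L2_le_h2[OF assms(1), of K] L2_le_h2[OF assms(2), of K] by linarith
  qed
  then show "(\<lambda>k. a k + b k) \<in> H2" "h2_norm (\<lambda>k. a k + b k) \<le> h2_norm a + h2_norm b"
    by (rule L2_bound)+
qed

lemma h2_diff:
  assumes "a \<in> H2" "b \<in> H2"
  shows "(\<lambda>k. a k - b k) \<in> H2" "h2_norm (\<lambda>k. a k - b k) \<le> h2_norm a + h2_norm b"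
proof -
  have m: "(\<lambda>k. (-1) * b k) \<in> H2" "h2_norm (\<lambda>k. (-1) * b k) = h2_norm b"
    using h2_scale[OF assms(2), of "-1"] by auto
  show "(\<lambda>k. a k - b k) \<in> H2" "h2_norm (\<lambda>k. a k - b k) \<le> h2_norm a + h2_norm b"
    using h2_add[OF assms(1) m(1)] m(2) by auto
qed

lemma h2_norm_neg_swap: "h2_norm (\<lambda>k. a k - b k) = h2_norm (\<lambda>k. b k - a k)"
  unfolding h2_norm_def by (simp add: norm_minus_commute)

lemma h2_tri3:
  assumes "a \<in> H2" "b \<in> H2" "c \<in> H2"
  shows "h2_norm (\<lambda>k. a k - c k) \<le> h2_norm (\<lambda>k. a k - b k) + h2_norm (\<lambda>k. b k - c k)"
  using h2_add[OF h2_diff(1)[OF assms(1,2)] h2_diff(1)[OF assms(2,3)]] by simp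

lemma h2_div:
  assumes "a \<in> H2" "0 < d"
  shows "(\<lambda>k. a (k div d)) \<in> H2" "h2_norm (\<lambda>k. a (k div d)) = sqrt (real d) * h2_norm a"
proof -
  define f where "f k = (cmod (a k))\<^sup>2" for k
  define b where "b m = f (m div d)" for m
  have s: "summable f" using assms unfolding H2_def f_def by simp
  have f0: "0 \<le> f k" for k by (simp add: f_def)
  have blk: "(\<Sum>m\<in>{K * d..<K * d + d}. b m) = real d * f K" for K
  proof -
    have "(\<Sum>m\<in>{K * d..<K * d + d}. b m) = (\<Sum>m\<in>{K * d..<K * d + d}. f K)"
    proof (rule sum.cong[OF refl])
      fix m assume "m \<in> {K * d..<K * d + d}"
      then have "m div d = K" using assms(2)
        by (metis atLeastLessThan_iff div_nat_eqI mult.commute add.commute mult_Suc_right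
            less_eq_div_iff_mult_less_eq less_mult_imp_div_less)
      then show "b m = f K" by (simp add: b_def)
    qed
    then show ?thesis by simp
  qed
  have part: "(\<Sum>m<K * d. b m) = real d * (\<Sum>k<K. f k)" for K
  proof (induction K)
    case 0 then show ?case by simp
  next
    case (Suc K)
    have "{..<Suc K * d} = {..<K * d} \<union> {K * d..<K * d + d}" by auto
    then have "(\<Sum>m<Suc K * d. b m) = (\<Sum>m<K * d. b m) + (\<Sum>m\<in>{K * d..<K * d + d}. b m)"
      by (simp add: sum.union_disjoint ivl_disj_int)
    then show ?case using Suc blk by (simp add: algebra_simps)
  qed
  have sb: "summable b"
  proof (rule summableI_nonneg_bounded[of _ "real d * suminf f"])
    show "0 \<le> b m" for m by (simp add: b_def f0)
    fix M
    have "(\<Sum>m<M. b m) \<le> (\<Sum>m<M * d. b m)"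
      by (rule sum_mono2) (use assms(2) f0 b_def in auto)
    also have "\<dots> = real d * (\<Sum>k<M. f k)" by (rule part)
    also have "\<dots> \<le> real d * suminf f"
      by (intro mult_left_mono sum_le_suminf[OF s]) (use f0 in auto)
    finally show "(\<Sum>m<M. b m) \<le> real d * suminf f" .
  qed
  have "(\<lambda>K. real d * f K) sums suminf b"
    using sums_group[OF summable_sums[OF sb] assms(2)] blk by simp
  moreover have "(\<lambda>K. real d * f K) sums (real d * suminf f)"
    by (rule sums_mult[OF summable_sums[OF s]])
  ultimately have eq: "suminf b = real d * suminf f" using sums_unique2 by blast
  have "b = (\<lambda>k. (cmod (a (k div d)))\<^sup>2)" by (simp add: b_def f_def fun_eq_iff)
  then show "(\<lambda>k. a (k div d)) \<in> H2" using sb unfolding H2_def by simp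
  have f: "f = (\<lambda>k. (cmod (a k))\<^sup>2)" by (simp add: f_def fun_eq_iff)
  show "h2_norm (\<lambda>k. a (k div d)) = sqrt (real d) * h2_norm a"
    using eq unfolding h2_norm_def \<open>b = _\<close> f by (simp add: real_sqrt_mult)
qed


lemma cspan_H2:
  assumes "S \<subseteq> H2" "g \<in> cspan_seq S"
  shows "g \<in> H2"
proof -
  have "\<exists>m (c::nat\<Rightarrow>complex) v. (\<forall>i<m. v i \<in> S) \<and> g = (\<lambda>k. \<Sum>i<m. c i * v i k)"
    using assms(2) by (simp add: cspan_seq_def)
  then obtain m and c :: "nat \<Rightarrow> complex" and v where v: "\<forall>i<m. v i \<in> S" and g: "g = (\<lambda>k. \<Sum>i<m. c i * v i k)"
    by blast
  show ?thesis unfolding g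
    by (rule fin_tri(1)) (use v assms(1) h2_scale in auto)
qed

lemma cspan_zero: "(\<lambda>k. 0) \<in> cspan_seq S"
  unfolding cspan_seq_def by (rule CollectI, rule exI[of _ 0]) auto

lemma cspan_single: "v \<in> S \<Longrightarrow> v \<in> cspan_seq S"
  unfolding cspan_seq_def
  by (rule CollectI, rule exI[of _ 1], rule exI[of _ "\<lambda>_. 1"], rule exI[of _ "\<lambda>_. v"]) auto

lemma cspan_scale:
  assumes "g \<in> cspan_seq S"
  shows "(\<lambda>k. a * g k) \<in> cspan_seq S"
proof -
  have "\<exists>m (c::nat\<Rightarrow>complex) v. (\<forall>i<m. v i \<in> S) \<and> g = (\<lambda>k. \<Sum>i<m. c i * v i k)"
    using assms by (simp add: cspan_seq_def)
  then obtain m and c :: "nat \<Rightarrow> complex" and v where v: "\<forall>i<m. v i \<in> S" and g: "g = (\<lambda>k. \<Sum>i<m. c i * v i k)"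
    by blast
  show ?thesis unfolding cspan_seq_def g
    by (rule CollectI, rule exI[of _ m], rule exI[of _ "\<lambda>i. a * c i"], rule exI[of _ v])
       (use v in \<open>auto simp: sum_distrib_left mult.assoc\<close>)
qed

lemma cspan_add:
  assumes "g1 \<in> cspan_seq S" "g2 \<in> cspan_seq S"
  shows "(\<lambda>k. g1 k + g2 k) \<in> cspan_seq S"
proof -
  have "\<exists>m (c::nat\<Rightarrow>complex) v. (\<forall>i<m. v i \<in> S) \<and> g1 = (\<lambda>k. \<Sum>i<m. c i * v i k)"
    using assms(1) by (simp add: cspan_seq_def)
  then obtain m1 and c1 :: "nat \<Rightarrow> complex" and v1 where v1: "\<forall>i<m1. v1 i \<in> S" and g1: "g1 = (\<lambda>k. \<Sum>i<m1. c1 i * v1 i k)"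
    by blast
  have "\<exists>m (c::nat\<Rightarrow>complex) v. (\<forall>i<m. v i \<in> S) \<and> g2 = (\<lambda>k. \<Sum>i<m. c i * v i k)"
    using assms(2) by (simp add: cspan_seq_def)
  then obtain m2 and c2 :: "nat \<Rightarrow> complex" and v2 where v2: "\<forall>i<m2. v2 i \<in> S" and g2: "g2 = (\<lambda>k. \<Sum>i<m2. c2 i * v2 i k)"
    by blast
  define c where "c i = (if i < m1 then c1 i else c2 (i - m1))" for i
  define v where "v i = (if i < m1 then v1 i else v2 (i - m1))" for i
  have vS: "\<forall>i<m1 + m2. v i \<in> S" using v1 v2 by (auto simp: v_def)
  have "(\<Sum>i<m1 + m2. c i * v i k) = (\<Sum>i<m1. c1 i * v1 i k) + (\<Sum>i<m2. c2 i * v2 i k)" for k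
  proof -
    have "(\<Sum>i<m1 + m2. c i * v i k) = (\<Sum>i\<in>{0..<m1}. c i * v i k) + (\<Sum>i\<in>{m1..<m1+m2}. c i * v i k)"
      by (simp add: sum.atLeastLessThan_concat lessThan_atLeast0)
    also have "(\<Sum>i\<in>{m1..<m1+m2}. c i * v i k) = (\<Sum>i\<in>{0..<m2}. c (i + m1) * v (i + m1) k)"
      using sum.shift_bounds_nat_ivl[of "\<lambda>i. c i * v i k" 0 m1 m2] by (simp add: add.commute)
    finally have "(\<Sum>i<m1 + m2. c i * v i k) = (\<Sum>i<m1. c i * v i k) + (\<Sum>i<m2. c (m1 + i) * v (m1 + i) k)"
      by (simp add: lessThan_atLeast0 add.commute)
    then show ?thesis by (simp add: c_def v_def)
  qed
  then have "(\<lambda>k. g1 k + g2 k) = (\<lambda>k. \<Sum>i<m1 + m2. c i * v i k)" unfolding g1 g2 by simp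
  then show ?thesis unfolding cspan_seq_def using vS by blast
qed

definition appr :: "(nat \<Rightarrow> complex) set \<Rightarrow> (nat \<Rightarrow> complex) \<Rightarrow> bool" where
  "appr S a \<longleftrightarrow> a \<in> H2 \<and> (\<forall>e>0. \<exists>g\<in>cspan_seq S. h2_norm (\<lambda>k. a k - g k) < e)"

lemma h2_norm_zero: "h2_norm (\<lambda>k. 0) = 0" by (simp add: h2_norm_def)

lemma appr_cspan: assumes "S \<subseteq> H2" "g \<in> cspan_seq S" shows "appr S g"
  unfolding appr_def
proof (intro conjI allI impI)
  show "g \<in> H2" by (rule cspan_H2[OF assms])
  fix e :: real assume "e > 0"
  then have "h2_norm (\<lambda>k. g k - g k) < e" using h2_norm_zero by simp
  then show "\<exists>g'\<in>cspan_seq S. h2_norm (\<lambda>k. g k - g' k) < e" using assms(2) by blast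
qed

lemma appr_lim:
  assumes S: "S \<subseteq> H2" and a: "a \<in> H2" and L: "\<And>e. e > 0 \<Longrightarrow> \<exists>b. appr S b \<and> h2_norm (\<lambda>k. a k - b k) < e"
  shows "appr S a"
  unfolding appr_def
proof (intro conjI a allI impI)
  fix e :: real assume e: "e > 0"
  obtain b where b: "appr S b" "h2_norm (\<lambda>k. a k - b k) < e/2" using L[of "e/2"] e by auto
  obtain g where g: "g \<in> cspan_seq S" "h2_norm (\<lambda>k. b k - g k) < e/2"
    using b(1) e unfolding appr_def by (meson half_gt_zero)
  have "h2_norm (\<lambda>k. a k - g k) \<le> h2_norm (\<lambda>k. a k - b k) + h2_norm (\<lambda>k. b k - g k)"
    by (rule h2_tri3[OF a]) (use b(1) g(1) cspan_H2[OF S] appr_def in blast)+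
  then have "h2_norm (\<lambda>k. a k - g k) < e" using b(2) g(2) by linarith
  then show "\<exists>g\<in>cspan_seq S. h2_norm (\<lambda>k. a k - g k) < e" using g(1) by blast
qed

lemma appr_add:
  assumes S: "S \<subseteq> H2" and "appr S a" "appr S b"
  shows "appr S (\<lambda>k. a k + b k)"
  unfolding appr_def
proof (intro conjI allI impI)
  have a: "a \<in> H2" and b: "b \<in> H2" using assms unfolding appr_def by auto
  show "(\<lambda>k. a k + b k) \<in> H2" by (rule h2_add[OF a b])
  fix e :: real assume e: "e > 0"
  obtain g1 where g1: "g1 \<in> cspan_seq S" "h2_norm (\<lambda>k. a k - g1 k) < e/2"
    using assms(2) e unfolding appr_def by (meson half_gt_zero)
  obtain g2 where g2: "g2 \<in> cspan_seq S" "h2_norm (\<lambda>k. b k - g2 k) < e/2"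
    using assms(3) e unfolding appr_def by (meson half_gt_zero)
  have h1: "(\<lambda>k. a k - g1 k) \<in> H2" by (rule h2_diff(1)[OF a cspan_H2[OF S g1(1)]])
  have h2: "(\<lambda>k. b k - g2 k) \<in> H2" by (rule h2_diff(1)[OF b cspan_H2[OF S g2(1)]])
  have "h2_norm (\<lambda>k. (a k + b k) - (g1 k + g2 k)) \<le> h2_norm (\<lambda>k. a k - g1 k) + h2_norm (\<lambda>k. b k - g2 k)"
    using h2_add(2)[OF h1 h2] by (simp add: algebra_simps)
  then show "\<exists>g\<in>cspan_seq S. h2_norm (\<lambda>k. a k + b k - g k) < e"
  proof (intro bexI[of _ "\<lambda>k. g1 k + g2 k"] cspan_add[OF g1(1) g2(1)])
    show "h2_norm (\<lambda>k. a k + b k - (g1 k + g2 k)) < e" using g1(2) g2(2) \<open>h2_norm _ \<le> _\<close> by linarith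
  qed
qed

lemma appr_scale:
  assumes S: "S \<subseteq> H2" and "appr S a"
  shows "appr S (\<lambda>k. c * a k)"
  unfolding appr_def
proof (intro conjI allI impI)
  have a: "a \<in> H2" using assms unfolding appr_def by auto
  show "(\<lambda>k. c * a k) \<in> H2" by (rule h2_scale[OF a])
  fix e :: real assume e: "e > 0"
  have c1: "cmod c + 1 > 0" by (smt (verit) norm_ge_zero)
  have e': "e / (cmod c + 1) > 0" using e c1 by (rule divide_pos_pos)
  obtain g where g: "g \<in> cspan_seq S" "h2_norm (\<lambda>k. a k - g k) < e / (cmod c + 1)"
    using assms(2) e' unfolding appr_def by blast
  have h: "(\<lambda>k. a k - g k) \<in> H2" by (rule h2_diff(1)[OF a cspan_H2[OF S g(1)]])
  have "h2_norm (\<lambda>k. c * a k - c * g k) = cmod c * h2_norm (\<lambda>k. a k - g k)"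
    using h2_scale(2)[OF h, of c] by (simp add: algebra_simps)
  also have "\<dots> \<le> (cmod c + 1) * h2_norm (\<lambda>k. a k - g k)"
    by (intro mult_right_mono h2_norm_nonneg[OF h]) simp
  also have "\<dots> < (cmod c + 1) * (e / (cmod c + 1))"
    by (intro mult_strict_left_mono g(2)) (use c1 in simp)
  also have "\<dots> = e" using c1 by simp
  finally show "\<exists>g\<in>cspan_seq S. h2_norm (\<lambda>k. c * a k - g k) < e"
    using cspan_scale[OF g(1), of c] by (intro bexI[of _ "\<lambda>k. c * g k"])
qed

lemma appr_zero: "S \<subseteq> H2 \<Longrightarrow> appr S (\<lambda>k. 0)"
  using appr_cspan cspan_zero by blast

lemma appr_sum:
  assumes S: "S \<subseteq> H2" and "finite T" and "\<And>i. i \<in> T \<Longrightarrow> appr S (b i)"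
  shows "appr S (\<lambda>k. \<Sum>i\<in>T. c i * b i k)"
  using assms(2,3)
proof (induction T rule: finite_induct)
  case empty
  then show ?case using appr_zero[OF S] by simp
next
  case (insert x F)
  have "appr S (\<lambda>k. c x * b x k + (\<Sum>i\<in>F. c i * b i k))"
    by (rule appr_add[OF S appr_scale[OF S]]) (use insert in auto)
  then show ?case using insert by simp
qed


definition Wt :: "nat \<Rightarrow> (nat \<Rightarrow> complex) \<Rightarrow> nat \<Rightarrow> complex" where
  "Wt n g = (\<lambda>k. \<Sum>j<n. g (n * k + j))"

lemma div_block: "j < n \<Longrightarrow> (n * k + j) div n = (k::nat)"
  by simp

lemma W_inner:
  assumes n: "0 < n" and f: "f \<in> H2" and g: "g \<in> H2"
  shows "h2_inner (W n f) g = h2_inner f (Wt n g)"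
proof -
  have Wf: "W n f \<in> H2" unfolding W_def by (rule h2_div(1)[OF f n])
  define a where "a m = W n f m * cnj (g m)" for m
  have sa: "summable a"
  proof (rule summable_norm_cancel, rule summable_comparison_test[of _ "\<lambda>m. (cmod (W n f m))\<^sup>2 + (cmod (g m))\<^sup>2"])
    have "norm (norm (a m)) \<le> (cmod (W n f m))\<^sup>2 + (cmod (g m))\<^sup>2" for m
    proof -
      have "norm (norm (a m)) = cmod (W n f m) * cmod (g m)" by (simp add: a_def norm_mult)
      also have "\<dots> \<le> (cmod (W n f m))\<^sup>2 + (cmod (g m))\<^sup>2"
      proof -
        have "2 * cmod (W n f m) * cmod (g m) \<le> (cmod (W n f m))\<^sup>2 + (cmod (g m))\<^sup>2"
          by (rule sum_squares_bound)
        moreover have "0 \<le> cmod (W n f m) * cmod (g m)" by simp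
        ultimately show ?thesis by linarith
      qed
      finally show ?thesis .
    qed
    then show "\<exists>N. \<forall>m\<ge>N. norm (norm (a m)) \<le> (cmod (W n f m))\<^sup>2 + (cmod (g m))\<^sup>2" by blast
    show "summable (\<lambda>m. (cmod (W n f m))\<^sup>2 + (cmod (g m))\<^sup>2)"
      using Wf g unfolding H2_def by (auto intro: summable_add)
  qed
  have grp: "(\<lambda>K. \<Sum>m\<in>{K * n..<K * n + n}. a m) sums suminf a"
    by (rule sums_group[OF summable_sums[OF sa] n])
  have "(\<Sum>m\<in>{K * n..<K * n + n}. a m) = f K * cnj (Wt n g K)" for K
  proof -
    have "(\<Sum>m\<in>{K * n..<K * n + n}. a m) = (\<Sum>j\<in>{0..<n}. a (j + K * n))"
      using sum.shift_bounds_nat_ivl[of a 0 "K * n" n] by (simp add: add.commute)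
    also have "\<dots> = (\<Sum>j\<in>{0..<n}. f K * cnj (g (n * K + j)))"
    proof (rule sum.cong[OF refl])
      fix j assume "j \<in> {0..<n}"
      then have "(j + K * n) div n = K" by (simp add: mult.commute)
      moreover have "j + K * n = n * K + j" by simp
      ultimately show "a (j + K * n) = f K * cnj (g (n * K + j))"
        by (simp only: a_def W_def)
    qed
    also have "\<dots> = f K * cnj (Wt n g K)"
      by (simp add: Wt_def sum_distrib_left lessThan_atLeast0)
    finally show ?thesis .
  qed
  then have "(\<lambda>K. f K * cnj (Wt n g K)) sums suminf a" using grp by simp
  then show ?thesis unfolding h2_inner_def a_def by (simp add: sums_iff)
qed

definition ev :: "nat \<Rightarrow> nat \<Rightarrow> complex" where
  "ev q = (\<lambda>k. if k = q then 1 else 0)"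

lemma ev_H2: "ev q \<in> H2"
proof -
  have "(\<lambda>k. (cmod (ev q k))\<^sup>2) = (\<lambda>k. if k = q then 1 else 0)"
    by (auto simp: ev_def fun_eq_iff)
  moreover have "summable (\<lambda>k. if k = q then (1::real) else 0)"
    using sums_single[of q "\<lambda>_. (1::real)"] by (auto simp: sums_iff)
  ultimately show ?thesis unfolding H2_def by simp
qed

lemma ev_norm: "h2_norm (ev q) = 1"
proof -
  have "(\<lambda>k. (cmod (ev q k))\<^sup>2) = (\<lambda>k. if k = q then 1 else 0)"
    by (auto simp: ev_def fun_eq_iff)
  moreover have "(\<lambda>k. if k = q then (1::real) else 0) sums 1"
    using sums_single[of q "\<lambda>_. (1::real)"] by simp
  ultimately show ?thesis unfolding h2_norm_def by (simp add: sums_iff)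
qed

lemma inner_ev: "h2_inner (ev q) h = cnj (h q)"
proof -
  have "(\<lambda>m. ev q m * cnj (h m)) = (\<lambda>m. if m = q then cnj (h m) else 0)"
    by (auto simp: ev_def fun_eq_iff)
  moreover have "(\<lambda>m. if m = q then cnj (h m) else 0) sums cnj (h q)" by (rule sums_single)
  ultimately show ?thesis unfolding h2_inner_def by (simp add: sums_iff)
qed

lemma adj_eq:
  assumes n: "0 < n" and g: "g \<in> H2" and Wg: "Wt n g \<in> H2"
  shows "adjoint_H2 (W n) g = Wt n g"
  unfolding adjoint_H2_def
proof (rule the_equality)
  show "Wt n g \<in> H2 \<and> (\<forall>f\<in>H2. h2_inner (W n f) g = h2_inner f (Wt n g))"
    using Wg W_inner[OF n _ g] by blast
  fix h assume h: "h \<in> H2 \<and> (\<forall>f\<in>H2. h2_inner (W n f) g = h2_inner f h)"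
  show "h = Wt n g"
  proof
    fix q
    have "cnj (h q) = h2_inner (ev q) h" by (simp add: inner_ev)
    also have "\<dots> = h2_inner (W n (ev q)) g" using h ev_H2 by auto
    also have "\<dots> = h2_inner (ev q) (Wt n g)" by (rule W_inner[OF n ev_H2 g])
    also have "\<dots> = cnj (Wt n g q)" by (simp add: inner_ev)
    finally show "h q = Wt n g q" by simp
  qed
qed


definition geig :: "nat \<Rightarrow> complex \<Rightarrow> (nat \<Rightarrow> complex) \<Rightarrow> nat \<Rightarrow> complex" where
  "geig n lam s = (\<lambda>k. \<Sum>i. (lam / of_nat n) ^ i * s (k div n ^ i))"

lemma Wp_norm:
  assumes "s \<in> H2" "0 < n"
  shows "(\<lambda>k. c * s (k div n ^ i)) \<in> H2"
        "h2_norm (\<lambda>k. c * s (k div n ^ i)) = cmod c * sqrt (real n) ^ i * h2_norm s"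
proof -
  have d: "(\<lambda>k. s (k div n ^ i)) \<in> H2" "h2_norm (\<lambda>k. s (k div n ^ i)) = sqrt (real (n ^ i)) * h2_norm s"
    using h2_div[OF assms(1), of "n ^ i"] assms(2) by auto
  show "(\<lambda>k. c * s (k div n ^ i)) \<in> H2" by (rule h2_scale(1)[OF d(1)])
  show "h2_norm (\<lambda>k. c * s (k div n ^ i)) = cmod c * sqrt (real n) ^ i * h2_norm s"
    using h2_scale(2)[OF d(1), of c] d(2) by (simp add: real_sqrt_power)
qed

lemma geig_props:
  assumes n: "2 \<le> n" and s: "s \<in> H2" and ker: "Wt n s = (\<lambda>_. 0)" and lam: "cmod lam < sqrt (real n)"
  shows "\<And>k. summable (\<lambda>i. (lam / of_nat n) ^ i * s (k div n ^ i))"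
        "geig n lam s \<in> H2"
        "Wt n (geig n lam s) = (\<lambda>k. lam * geig n lam s k)"
        "geig n lam s \<in> eigenspace_H2 (adjoint_H2 (W n)) lam"
proof -
  have n0: "0 < n" using n by simp
  define r where "r = cmod lam / sqrt (real n)"
  have sn: "0 < sqrt (real n)" using n0 by simp
  have r0: "0 \<le> r" and r1: "r < 1" using lam sn by (auto simp: r_def)
  define x where "x i = (\<lambda>k. (lam / of_nat n) ^ i * s (k div n ^ i))" for i
  have xH: "x i \<in> H2" for i unfolding x_def by (rule Wp_norm(1)[OF s n0])
  have xn: "h2_norm (x i) \<le> r ^ i * h2_norm s" for i
  proof -
    have "h2_norm (x i) = cmod ((lam / of_nat n) ^ i) * sqrt (real n) ^ i * h2_norm s"
      unfolding x_def by (rule Wp_norm(2)[OF s n0])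
    also have "cmod ((lam / of_nat n) ^ i) * sqrt (real n) ^ i = r ^ i"
    proof -
      have "cmod ((lam / of_nat n) ^ i) = (cmod lam / real n) ^ i"
        by (simp add: norm_power norm_divide)
      then have "cmod ((lam / of_nat n) ^ i) * sqrt (real n) ^ i = (cmod lam / real n * sqrt (real n)) ^ i"
        by (metis power_mult_distrib)
      also have "cmod lam / real n * sqrt (real n) = r"
        unfolding r_def using sn by (simp add: field_simps)
      finally show ?thesis .
    qed
    finally show ?thesis by simp
  qed
  have sw: "summable (\<lambda>i. r ^ i * h2_norm s)"
    by (rule summable_mult2, rule summable_geometric) (use r0 r1 in simp)
  note T = inf_tri[of x, OF xH xn sw]
  show sk: "summable (\<lambda>i. (lam / of_nat n) ^ i * s (k div n ^ i))" for k
    using T(1)[of k] by (simp add: x_def)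
  show gH: "geig n lam s \<in> H2" using T(2) by (simp add: x_def geig_def)
  show Wg: "Wt n (geig n lam s) = (\<lambda>k. lam * geig n lam s k)"
  proof
    fix k
    define F where "F i = (\<Sum>j<n. (lam / of_nat n) ^ i * s ((n * k + j) div n ^ i))" for i
    have sF: "summable F" unfolding F_def by (intro summable_sum sk)
    have "Wt n (geig n lam s) k = (\<Sum>j<n. \<Sum>i. (lam / of_nat n) ^ i * s ((n * k + j) div n ^ i))"
      by (simp add: Wt_def geig_def)
    also have "\<dots> = suminf F"
      unfolding F_def by (rule suminf_sum[symmetric]) (rule sk)
    also have "\<dots> = F 0 + (\<Sum>i. F (Suc i))" using suminf_split_head[OF sF] by simp
    also have "F 0 = 0" using fun_cong[OF ker, of k] by (simp add: F_def Wt_def)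
    also have "(\<lambda>i. F (Suc i)) = (\<lambda>i. lam * ((lam / of_nat n) ^ i * s (k div n ^ i)))"
    proof
      fix i
      have "F (Suc i) = (\<Sum>j<n. (lam / of_nat n) ^ Suc i * s (k div n ^ i))"
        unfolding F_def
      proof (rule sum.cong[OF refl])
        fix j assume "j \<in> {..<n}"
        then have "(n * k + j) div n ^ Suc i = k div n ^ i"
          by (simp add: div_mult2_eq)
        then show "(lam / of_nat n) ^ Suc i * s ((n * k + j) div n ^ Suc i) = (lam / of_nat n) ^ Suc i * s (k div n ^ i)"
          by simp
      qed
      also have "\<dots> = of_nat n * (lam / of_nat n) ^ Suc i * s (k div n ^ i)" by simp
      also have "\<dots> = lam * ((lam / of_nat n) ^ i * s (k div n ^ i))" using n0 by simp
      finally show "F (Suc i) = lam * ((lam / of_nat n) ^ i * s (k div n ^ i))" .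
    qed
    also have "(\<Sum>i. lam * ((lam / of_nat n) ^ i * s (k div n ^ i))) = lam * geig n lam s k"
      unfolding geig_def by (rule suminf_mult[OF sk])
    finally show "Wt n (geig n lam s) k = lam * geig n lam s k" by simp
  qed
  have "Wt n (geig n lam s) \<in> H2" unfolding Wg by (rule h2_scale(1)[OF gH])
  then have "adjoint_H2 (W n) (geig n lam s) = Wt n (geig n lam s)" by (rule adj_eq[OF n0 gH])
  then show "geig n lam s \<in> eigenspace_H2 (adjoint_H2 (W n)) lam"
    unfolding eigenspace_H2_def using gH Wg by simp
qed


lemma root_sum:
  fixes N l :: nat
  assumes N: "1 \<le> N"
  defines "\<omega> \<equiv> exp (2 * of_real pi * \<i> / of_nat N)"
  shows "(\<Sum>j<N. \<omega> ^ (j * l)) = (if N dvd l then of_nat N else 0)"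
proof -
  have wl: "\<omega> ^ l = exp (2 * of_real pi * \<i> * of_nat l / of_nat N)"
    unfolding \<omega>_def by (simp add: exp_of_nat_mult[symmetric] algebra_simps)
  have wN: "(\<omega> ^ l) ^ N = 1"
  proof -
    have "\<omega> ^ N = 1" using complex_root_unity[of N 1] N unfolding \<omega>_def by simp
    then show ?thesis by (metis power_mult mult.commute power_one)
  qed
  have s: "(\<Sum>j<N. \<omega> ^ (j * l)) = (\<Sum>j<N. (\<omega> ^ l) ^ j)"
    by (intro sum.cong refl) (metis power_mult mult.commute)
  show ?thesis
  proof (cases "N dvd l")
    case True
    then have "\<omega> ^ l = 1" using wl complex_root_unity_eq_1[OF N, of l] by simp
    then show ?thesis using s True by simp
  next
    case False
    then have "\<omega> ^ l \<noteq> 1" using wl complex_root_unity_eq_1[OF N, of l] by simp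
    then have "(\<Sum>j<N. (\<omega> ^ l) ^ j) = 0" using geometric_sum[of "\<omega> ^ l" N] wN by simp
    then show ?thesis using s False by simp
  qed
qed

lemma norm_omega: "cmod (exp (2 * of_real pi * \<i> / of_nat N)) = 1"
proof -
  have "2 * of_real pi * \<i> / of_nat N = \<i> * of_real (2 * pi / real N)" by simp
  then show ?thesis by (simp only: norm_exp_i_times)
qed

lemma dvd_small:
  fixes i p N :: nat
  assumes "p < N" "i < N" "i \<noteq> p" "N dvd (i + N - p)"
  shows False
proof -
  obtain t where t: "i + N - p = N * t" using assms(4) by (auto simp: dvd_def)
  show False
  proof (cases t)
    case 0 then show ?thesis using t assms by simp
  next
    case (Suc t')
    then show ?thesis
    proof (cases t')
      case 0 then show ?thesis using t Suc assms by simp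
    next
      case (Suc t'')
      then have "N * t \<ge> 2 * N" using \<open>t = Suc t'\<close> by simp
      then show ?thesis using t assms by linarith
    qed
  qed
qed

definition SS :: "nat \<Rightarrow> (nat \<Rightarrow> complex) set" where
  "SS n = (\<Union>lam\<in>{lam::complex. cmod lam > 1}. eigenspace_H2 (adjoint_H2 (W n)) lam)"

lemma SS_H2: "SS n \<subseteq> H2" unfolding SS_def eigenspace_H2_def by auto


lemma approx_Wp:
  assumes n: "2 \<le> n" and s: "s \<in> H2" and ker: "Wt n s = (\<lambda>_. 0)"
  shows "appr (SS n) (\<lambda>k. s (k div n ^ p))"
proof (rule appr_lim[OF SS_H2])
  have n0: "0 < n" using n by simp
  show "(\<lambda>k. s (k div n ^ p)) \<in> H2" using h2_div(1)[OF s, of "n ^ p"] n0 by simp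
  fix e :: real assume e: "e > 0"
  define c :: real where "c = 6/5"
  have c0: "0 < c" and c1: "1 < c" by (auto simp: c_def)
  have rn: "(2::real) \<le> real n" using n by simp
  have "c\<^sup>2 < real n" using rn by (simp add: c_def power2_eq_square)
  then have csn: "c < sqrt (real n)" by (rule real_less_rsqrt)
  have sn: "0 < sqrt (real n)" using n0 by simp
  define r where "r = c / sqrt (real n)"
  have r0: "0 \<le> r" and r1: "r < 1" using c0 csn sn by (auto simp: r_def)
  define K where "K = (real n / c) ^ p * h2_norm s"
  have K0: "0 \<le> K" unfolding K_def using h2_norm_nonneg[OF s] c0 by simp
  have L: "(\<lambda>N. r ^ N) \<longlonglongrightarrow> 0" by (rule LIMSEQ_power_zero) (use r0 r1 in simp)
  have "(\<lambda>N. K * r ^ N / (1 - r)) \<longlonglongrightarrow> K * 0 / (1 - r)"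
    by (intro tendsto_divide tendsto_mult tendsto_const L) (use r1 in auto)
  then have "(\<lambda>N. K * r ^ N / (1 - r)) \<longlonglongrightarrow> 0" by simp
  then have ev1: "eventually (\<lambda>N. K * r ^ N / (1 - r) < e) sequentially"
    using e by (rule order_tendstoD(2))
  have ev2: "eventually (\<lambda>N. p < N) sequentially" by (rule eventually_gt_at_top)
  obtain N0 where N0: "\<forall>N\<ge>N0. K * r ^ N / (1 - r) < e \<and> p < N"
    using eventually_conj[OF ev1 ev2] unfolding eventually_sequentially by blast
  define N where "N = N0"
  have NB: "K * r ^ N / (1 - r) < e" and pN: "p < N" using N0 by (auto simp: N_def)
  have N1: "1 \<le> N" using pN by simp
  define \<omega> where "\<omega> = exp (2 * of_real pi * \<i> / of_nat N)"
  have nw: "cmod \<omega> = 1" unfolding \<omega>_def by (rule norm_omega)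
  define lam where "lam j = complex_of_real c * \<omega> ^ j" for j
  define a where "a j = complex_of_real ((real n / c) ^ p / real N) * \<omega> ^ (j * (N - p))" for j
  define \<beta> where "\<beta> i = (if N dvd (i + N - p) then complex_of_real ((real n / c) ^ p * (c / real n) ^ i) else 0)" for i
  define b where "b = (\<lambda>k. \<Sum>j<N. a j * geig n (lam j) s k)"
  have lamn: "cmod (lam j) = c" for j using c0 nw by (simp add: lam_def norm_mult norm_power)
  have lam_sn: "cmod (lam j) < sqrt (real n)" for j using lamn csn by simp
  have eig: "geig n (lam j) s \<in> SS n" for j
    using geig_props(4)[OF n s ker lam_sn[of j]] lamn[of j] c1 unfolding SS_def by auto
  have bspan: "b \<in> cspan_seq (SS n)"
    unfolding cspan_seq_def b_def mem_Collect_eq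
    by (rule exI[of _ N], rule exI[of _ a], rule exI[of _ "\<lambda>j. geig n (lam j) s"]) (use eig in simp)
  have appr_b: "appr (SS n) b" by (rule appr_cspan[OF SS_H2 bspan])
  have coef: "(\<Sum>j<N. a j * (lam j / of_nat n) ^ i) = \<beta> i" for i
  proof -
    have "a j * (lam j / of_nat n) ^ i = complex_of_real ((real n / c) ^ p / real N * (c / real n) ^ i) * \<omega> ^ (j * (i + N - p))" for j
    proof -
      have "lam j / of_nat n = (complex_of_real c / of_nat n) * \<omega> ^ j" by (simp add: lam_def)
      then have "(lam j / of_nat n) ^ i = (complex_of_real c / of_nat n) ^ i * (\<omega> ^ j) ^ i"
        by (simp only: power_mult_distrib)
      also have "(\<omega> ^ j) ^ i = \<omega> ^ (j * i)" by (simp add: power_mult)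
      also have "(complex_of_real c / of_nat n) ^ i = complex_of_real ((c / real n) ^ i)" by simp
      finally have "(lam j / of_nat n) ^ i = complex_of_real ((c / real n) ^ i) * \<omega> ^ (j * i)" .
      moreover have "\<omega> ^ (j * (N - p)) * \<omega> ^ (j * i) = \<omega> ^ (j * (i + N - p))"
        using pN by (simp add: power_add[symmetric] algebra_simps)
      ultimately show ?thesis unfolding a_def by (simp add: algebra_simps)
    qed
    then have "(\<Sum>j<N. a j * (lam j / of_nat n) ^ i) = complex_of_real ((real n / c) ^ p / real N * (c / real n) ^ i) * (\<Sum>j<N. \<omega> ^ (j * (i + N - p)))"
      by (simp add: sum_distrib_left)
    also have "\<dots> = \<beta> i" unfolding root_sum[OF N1, of "i + N - p", folded \<omega>_def] \<beta>_def using N1 by auto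
    finally show ?thesis .
  qed
  have sk: "summable (\<lambda>i. (lam j / of_nat n) ^ i * s (k div n ^ i))" for j k
    by (rule geig_props(1)[OF n s ker lam_sn])
  have sb: "summable (\<lambda>i. \<beta> i * s (k div n ^ i))" and bk: "b k = (\<Sum>i. \<beta> i * s (k div n ^ i))" for k
  proof -
    have eqf: "(\<lambda>i. \<Sum>j<N. a j * ((lam j / of_nat n) ^ i * s (k div n ^ i))) = (\<lambda>i. \<beta> i * s (k div n ^ i))"
      by (rule ext) (simp add: coef[symmetric] sum_distrib_right mult.assoc)
    have s1: "summable (\<lambda>i. a j * ((lam j / of_nat n) ^ i * s (k div n ^ i)))" for j
      by (rule summable_mult[OF sk])
    have "summable (\<lambda>i. \<Sum>j<N. a j * ((lam j / of_nat n) ^ i * s (k div n ^ i)))"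
      by (rule summable_sum) (rule s1)
    then show "summable (\<lambda>i. \<beta> i * s (k div n ^ i))" unfolding eqf .
    have "b k = (\<Sum>j<N. \<Sum>i. a j * ((lam j / of_nat n) ^ i * s (k div n ^ i)))"
      unfolding b_def geig_def by (simp add: suminf_mult[OF sk])
    also have "\<dots> = (\<Sum>i. \<Sum>j<N. a j * ((lam j / of_nat n) ^ i * s (k div n ^ i)))"
      by (rule suminf_sum[symmetric]) (rule s1)
    finally show "b k = (\<Sum>i. \<beta> i * s (k div n ^ i))" unfolding eqf .
  qed
  have \<beta>p: "\<beta> p = 1"
  proof -
    have "(real n / c) ^ p * (c / real n) ^ p = (real n / c * (c / real n)) ^ p" by (simp only: power_mult_distrib)
    also have "real n / c * (c / real n) = 1" using c0 n0 by simp
    finally have h: "(real n / c) ^ p * (c / real n) ^ p = 1" by (simp only: power_one)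
    have "N dvd (p + N - p)" by simp
    then show ?thesis unfolding \<beta>_def using h by simp
  qed
  have \<beta>big: "N \<le> i" if "i \<noteq> p" "\<beta> i \<noteq> 0" for i
  proof (rule ccontr)
    assume "\<not> N \<le> i"
    then have "i < N" by simp
    moreover have "N dvd (i + N - p)" using that(2) unfolding \<beta>_def by (auto split: if_splits)
    ultimately show False using dvd_small[OF pN _ that(1)] by blast
  qed
  define y where "y i = (\<lambda>k. (if i = p then 0 else \<beta> i) * s (k div n ^ i))" for i
  define w where "w i = (if N \<le> i then K * r ^ i else 0)" for i
  have yH: "y i \<in> H2" for i unfolding y_def by (rule Wp_norm(1)[OF s n0])
  have yn: "h2_norm (y i) \<le> w i" for i
  proof -
    have eq: "h2_norm (y i) = cmod (if i = p then 0 else \<beta> i) * sqrt (real n) ^ i * h2_norm s"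
      unfolding y_def by (rule Wp_norm(2)[OF s n0])
    show ?thesis
    proof (cases "i = p \<or> \<beta> i = 0")
      case True
      then have "h2_norm (y i) = 0" using eq by auto
      then show ?thesis using K0 r0 by (simp add: w_def)
    next
      case False
      then have Ni: "N \<le> i" using \<beta>big by blast
      have dv: "N dvd (i + N - p)" using False unfolding \<beta>_def by (auto split: if_splits)
      have "\<beta> i = complex_of_real ((real n / c) ^ p * (c / real n) ^ i)"
        unfolding \<beta>_def using dv by (rule if_P)
      then have "cmod (\<beta> i) = \<bar>(real n / c) ^ p * (c / real n) ^ i\<bar>" by (simp only: norm_of_real)
      then have "cmod (\<beta> i) = (real n / c) ^ p * (c / real n) ^ i" using c0 n0 by simp
      then have "h2_norm (y i) = (real n / c) ^ p * ((c / real n) ^ i * sqrt (real n) ^ i) * h2_norm s"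
        using eq False by simp
      also have "(c / real n) ^ i * sqrt (real n) ^ i = r ^ i"
      proof -
        have "c / real n * sqrt (real n) = r" unfolding r_def using sn by (simp add: field_simps)
        then show ?thesis by (metis power_mult_distrib)
      qed
      finally show ?thesis using Ni by (simp add: w_def K_def)
    qed
  qed
  have sw: "w sums (K * r ^ N / (1 - r))"
  proof -
    have "(\<lambda>i. K * r ^ N * r ^ i) sums (K * r ^ N * (1 / (1 - r)))"
      by (rule sums_mult, rule geometric_sums) (use r0 r1 in simp)
    moreover have "(\<lambda>i. w (i + N)) = (\<lambda>i. K * r ^ N * r ^ i)"
      by (simp add: w_def power_add fun_eq_iff)
    ultimately have "(\<lambda>i. w (i + N)) sums (K * r ^ N / (1 - r))" by simp
    moreover have "\<And>i. i < N \<Longrightarrow> w i = 0" by (simp add: w_def)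
    ultimately show ?thesis using sums_zero_iff_shift[of N w] by blast
  qed
  note T = inf_tri[of y w, OF yH yn sums_summable[OF sw]]
  have ysum: "(\<Sum>i. y i k) = b k - s (k div n ^ p)" for k
  proof -
    have e1: "(\<lambda>i. y i k) = (\<lambda>i. \<beta> i * s (k div n ^ i) - (if i = p then s (k div n ^ i) else 0))"
      by (rule ext) (simp add: y_def \<beta>p)
    have e2: "(\<lambda>i. if i = p then s (k div n ^ i) else 0) sums s (k div n ^ p)" by (rule sums_single)
    have "(\<lambda>i. y i k) sums (b k - s (k div n ^ p))"
      unfolding e1 bk[of k] by (rule sums_diff[OF summable_sums[OF sb] e2])
    then show ?thesis by (simp add: sums_iff)
  qed
  have "h2_norm (\<lambda>k. s (k div n ^ p) - b k) = h2_norm (\<lambda>k. \<Sum>i. y i k)"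
    by (subst h2_norm_neg_swap) (simp add: ysum)
  also have "\<dots> \<le> suminf w" by (rule T(3))
  also have "\<dots> = K * r ^ N / (1 - r)" using sw by (simp add: sums_iff)
  finally have "h2_norm (\<lambda>k. s (k div n ^ p) - b k) < e" using NB by linarith
  then show "\<exists>b. appr (SS n) b \<and> h2_norm (\<lambda>k. s (k div n ^ p) - b k) < e" using appr_b by blast
qed


definition sv :: "nat \<Rightarrow> nat \<Rightarrow> nat \<Rightarrow> complex" where
  "sv n q = (\<lambda>k. ev q k - (1 / of_nat n) * ev (q div n) (k div n))"

lemma sv_H2: assumes "0 < n" shows "sv n q \<in> H2"
proof -
  have "(\<lambda>k. (1 / of_nat n) * ev (q div n) (k div n)) \<in> H2"
    by (rule h2_scale(1), rule h2_div(1)[OF ev_H2 assms])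
  then show ?thesis unfolding sv_def by (rule h2_diff(1)[OF ev_H2])
qed

lemma sum_ev_block: assumes "0 < n"
  shows "(\<Sum>j<n. ev q (n * k + j)) = (if k = q div n then 1 else 0)"
proof (cases "k = q div n")
  case True
  have "(\<Sum>j<n. ev q (n * k + j)) = (\<Sum>j<n. if j = q mod n then 1 else 0)"
  proof (rule sum.cong[OF refl])
    fix j assume "j \<in> {..<n}"
    have "q = n * k + q mod n" using True by simp
    then have "(n * k + j = q) = (j = q mod n)" by linarith
    then show "ev q (n * k + j) = (if j = q mod n then 1 else 0)" by (simp add: ev_def)
  qed
  also have "\<dots> = 1" using assms by simp
  finally show ?thesis using True by simp
next
  case False
  have "ev q (n * k + j) = 0" if "j < n" for j
  proof -
    have "n * k + j \<noteq> q"
    proof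
      assume "n * k + j = q"
      then have "q div n = k" using that by auto
      then show False using False by simp
    qed
    then show ?thesis by (simp add: ev_def)
  qed
  then show ?thesis using False by simp
qed

lemma sv_ker: assumes "0 < n" shows "Wt n (sv n q) = (\<lambda>_. 0)"
proof
  fix k
  have "Wt n (sv n q) k = (\<Sum>j<n. ev q (n * k + j)) - (1 / of_nat n) * (\<Sum>j<n. ev (q div n) k)"
    using assms by (simp add: Wt_def sv_def sum_subtractf sum_distrib_left)
  also have "\<dots> = 0"
  proof -
    have A: "(\<Sum>j<n. ev q (n * k + j)) = (if k = q div n then 1 else 0)" by (rule sum_ev_block[OF assms])
    have B: "(\<Sum>j<n. ev (q div n) k) = of_nat n * (if k = q div n then 1 else 0)" by (simp add: ev_def)
    show ?thesis unfolding A B using assms by simp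
  qed
  finally show "Wt n (sv n q) k = 0" .
qed

lemma ev_decomp:
  assumes "0 < n"
  shows "ev m k = (\<Sum>p<P. (1 / of_nat n) ^ p * sv n (m div n ^ p) (k div n ^ p))
                  + (1 / of_nat n) ^ P * ev (m div n ^ P) (k div n ^ P)"
proof (induction P)
  case 0
  then show ?case by simp
next
  case (Suc P)
  have d1: "m div n ^ Suc P = m div n ^ P div n" by (simp only: power_Suc2 div_mult2_eq)
  have d2: "k div n ^ Suc P = k div n ^ P div n" by (simp only: power_Suc2 div_mult2_eq)
  have "ev (m div n ^ P) (k div n ^ P) = sv n (m div n ^ P) (k div n ^ P)
        + (1 / of_nat n) * ev (m div n ^ Suc P) (k div n ^ Suc P)"
    unfolding d1 d2 by (simp add: sv_def)
  then show ?case using Suc by (simp add: algebra_simps)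
qed

lemma appr_ev:
  assumes n: "2 \<le> n"
  shows "appr (SS n) (ev m)"
proof (rule appr_lim[OF SS_H2 ev_H2])
  fix e :: real assume e: "e > 0"
  have n0: "0 < n" using n by simp
  have sn: "1 < sqrt (real n)" using n by simp
  obtain P where P: "(1 / sqrt (real n)) ^ P < e"
    using real_arch_pow_inv[OF e, of "1 / sqrt (real n)"] sn by auto
  define b where "b = (\<lambda>k. \<Sum>p<P. (1 / of_nat n) ^ p * sv n (m div n ^ p) (k div n ^ p))"
  have ab: "appr (SS n) b" unfolding b_def
    by (rule appr_sum[OF SS_H2]) (auto intro: approx_Wp[OF n sv_H2[OF n0] sv_ker[OF n0]])
  have "(\<lambda>k. ev m k - b k) = (\<lambda>k. (1 / of_nat n) ^ P * ev (m div n ^ P) (k div n ^ P))"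
  proof
    fix k
    have "ev m k = b k + (1 / of_nat n) ^ P * ev (m div n ^ P) (k div n ^ P)"
      unfolding b_def by (rule ev_decomp[OF n0])
    then show "ev m k - b k = (1 / of_nat n) ^ P * ev (m div n ^ P) (k div n ^ P)" by simp
  qed
  then have "h2_norm (\<lambda>k. ev m k - b k) = cmod ((1 / of_nat n) ^ P) * sqrt (real n) ^ P * h2_norm (ev (m div n ^ P))"
    using Wp_norm(2)[OF ev_H2 n0] by simp
  also have "\<dots> = (1 / sqrt (real n)) ^ P"
  proof -
    have "cmod ((1 / of_nat n) ^ P :: complex) = (1 / real n) ^ P" by (simp add: norm_power norm_divide)
    moreover have "(1 / real n) ^ P * sqrt (real n) ^ P = (1 / real n * sqrt (real n)) ^ P"
      by (simp only: power_mult_distrib)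
    moreover have "1 / real n * sqrt (real n) = 1 / sqrt (real n)"
      using n0 by (simp add: field_simps)
    ultimately show ?thesis by (simp add: ev_norm)
  qed
  finally show "\<exists>b. appr (SS n) b \<and> h2_norm (\<lambda>k. ev m k - b k) < e" using ab P by auto
qed

lemma appr_all:
  assumes n: "2 \<le> n" and f: "f \<in> H2"
  shows "appr (SS n) f"
proof (rule appr_lim[OF SS_H2 f])
  fix e :: real assume e: "e > 0"
  have sf: "summable (\<lambda>k. (cmod (f k))\<^sup>2)" using f by (simp add: H2_def)
  obtain M where M: "norm (\<Sum>i. (cmod (f (i + M)))\<^sup>2) < e\<^sup>2"
    using suminf_exist_split[OF _ sf, of "e\<^sup>2"] e by auto
  define b where "b = (\<lambda>k. \<Sum>m<M. f m * ev m k)"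
  have ab: "appr (SS n) b" unfolding b_def
    by (rule appr_sum[OF SS_H2]) (auto intro: appr_ev[OF n])
  have bk: "b k = (if k < M then f k else 0)" for k
  proof -
    have "(\<Sum>m<M. f m * ev m k) = (\<Sum>m<M. if m = k then f k else 0)"
      by (rule sum.cong) (auto simp: ev_def)
    then show ?thesis unfolding b_def by (simp add: sum.delta')
  qed
  define X where "X = (\<Sum>i. (cmod (f (i + M)))\<^sup>2)"
  have "(\<lambda>i. (cmod (f (i + M)))\<^sup>2) sums X" unfolding X_def
    by (rule summable_sums) (rule summable_ignore_initial_segment[OF sf])
  moreover have "(\<lambda>i. (cmod (f (i + M) - b (i + M)))\<^sup>2) = (\<lambda>i. (cmod (f (i + M)))\<^sup>2)"
    by (simp add: bk)
  ultimately have "(\<lambda>i. (cmod (f (i + M) - b (i + M)))\<^sup>2) sums X" by simp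
  moreover have "\<And>i. i < M \<Longrightarrow> (cmod (f i - b i))\<^sup>2 = 0" by (simp add: bk)
  ultimately have "(\<lambda>i. (cmod (f i - b i))\<^sup>2) sums X"
    using sums_zero_iff_shift[of M "\<lambda>i. (cmod (f i - b i))\<^sup>2"] by blast
  then have "h2_norm (\<lambda>k. f k - b k) = sqrt X" by (simp add: h2_norm_def sums_iff)
  also have "\<dots> < e"
  proof -
    have X0: "0 \<le> X" unfolding X_def by (rule suminf_nonneg) (use summable_ignore_initial_segment[OF sf] in simp_all)
    have "X < e\<^sup>2" using M X0 by (simp add: X_def)
    then show ?thesis using e by (simp add: real_sqrt_less_iff real_less_lsqrt)
  qed
  finally show "\<exists>b. appr (SS n) b \<and> h2_norm (\<lambda>k. f k - b k) < e" using ab by blast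
qed

theorem mainTheorem6:
  fixes n :: nat
  assumes "n \<ge> 2"
  shows "dense_in_H2 (cspan_seq (\<Union>lam\<in>{lam::complex. cmod lam > 1}. eigenspace_H2 (adjoint_H2 (W n)) lam))"
  unfolding dense_in_H2_def SS_def[symmetric]
  using appr_all[OF assms] unfolding appr_def by blast

end
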